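(* Let $I$ be an index set and $(X_i)_{i\in I}$ topological spaces. Then $\prod_{i\in I}X_i$ is a Baire space if and only if $\prod_{i\in I}\mathcal K(X_i)$ is a Baire space (both with the product topology).
   Context: A topological space is a Baire space if every countable intersection of dense open subsets is dense. Krom space: for a space $X$ with topology $\tau$, let $\downarrow\tau^{\omega}$ be the set of sequences $f=(f(0),f(1),\dots)$ of nonempty open subsets of $X$ with $f(k+1)\subseteq f(k)$ for all $k$, and for $n\ge1$ let $\downarrow\tau^{n}$ be the set of such decreasing finite sequences of length $n$. $\mathcal K(X)=\{f\in\downarrow\tau^{\omega}:\bigcap_n f(n)\neq\emptyset\}$, topologized as a subspace of $\tau^{\omega}$ where $\tau$ carries the discrete topology; a base consists of the sets $[h]=\{g\in\mathcal K(X): g(k)=h(k)\text{ for all }k<n\}$ for $h\in\downarrow\tau^{n}$, $n\ge1$. *)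

theory Defs
  imports "HOL-Analysis.Analysis"
begin

definition baire_space :: "'a topology \<Rightarrow> bool" where
  "baire_space X \<longleftrightarrow>
     (\<forall>\<U>. countable \<U> \<and> (\<forall>U\<in>\<U>. openin X U \<and> X closure_of U = topspace X)
           \<longrightarrow> X closure_of (topspace X \<inter> \<Inter>\<U>) = topspace X)"

definition krom_carrier :: "'a topology \<Rightarrow> (nat \<Rightarrow> 'a set) set" where
  "krom_carrier X = {f. (\<forall>k. openin X (f k) \<and> f k \<noteq> {} \<and> f (Suc k) \<subseteq> f k)
                         \<and> (\<Inter>n. f n) \<noteq> {}}"

definition krom_space :: "'a topology \<Rightarrow> (nat \<Rightarrow> 'a set) topology" where
  "krom_space X = subtopology
     (product_topology (\<lambda>n. discrete_topology {U. openin X U}) UNIV) (krom_carrier X)"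

end

theory Submission
  imports Defs
begin


lemma topspace_krom: "topspace (krom_space X) = krom_carrier X"
  unfolding krom_space_def krom_carrier_def by auto

lemma kc_open: "f \<in> krom_carrier X \<Longrightarrow> openin X (f k)" by (simp add: krom_carrier_def)
lemma kc_ne: "f \<in> krom_carrier X \<Longrightarrow> f k \<noteq> {}" by (simp add: krom_carrier_def)
lemma kc_dec: "f \<in> krom_carrier X \<Longrightarrow> f (Suc k) \<subseteq> f k" by (simp add: krom_carrier_def)
lemma kc_pt: "f \<in> krom_carrier X \<Longrightarrow> \<exists>z. \<forall>k. z \<in> f k"
proof -
  assume "f \<in> krom_carrier X"
  then have "(\<Inter>k. f k) \<noteq> {}" by (simp add: krom_carrier_def)
  then obtain z where "z \<in> (\<Inter>k. f k)" by blast
  then show ?thesis by blast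
qed
lemma kc_intro:
  assumes "\<And>k. openin X (f k)" "\<And>k. f k \<noteq> {}" "\<And>k. f (Suc k) \<subseteq> f k" "\<And>k. z \<in> f k"
  shows "f \<in> krom_carrier X"
proof -
  have "z \<in> (\<Inter>k. f k)" using assms(4) by simp
  then have "(\<Inter>k. f k) \<noteq> {}" by blast
  then show ?thesis using assms(1-3) unfolding krom_carrier_def by simp
qed

lemma krom_nbhd:
  assumes "openin (krom_space X) Op" "f \<in> Op"
  shows "\<exists>N. {f' \<in> krom_carrier X. \<forall>k<N. f' k = f k} \<subseteq> Op"
proof -
  obtain T where T: "openin (product_topology (\<lambda>n. discrete_topology {U. openin X U}) UNIV) T"
    and OT: "Op = T \<inter> krom_carrier X"
    using assms(1) unfolding krom_space_def openin_subtopology by blast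
  have fT: "f \<in> T" using assms(2) OT by auto
  then obtain U where U: "finite {i \<in> UNIV. U i \<noteq> {V. openin X V}}"
     "f \<in> Pi\<^sub>E UNIV U" "Pi\<^sub>E UNIV U \<subseteq> T"
    using T unfolding openin_product_topology_alt by force
  obtain N where N: "\<forall>n\<in>{i \<in> UNIV. U i \<noteq> {V. openin X V}}. n < N"
    using U(1) finite_nat_set_iff_bounded by blast
  have "{f' \<in> krom_carrier X. \<forall>k<N. f' k = f k} \<subseteq> T"
  proof
    fix f' assume f': "f' \<in> {f' \<in> krom_carrier X. \<forall>k<N. f' k = f k}"
    have "f' \<in> Pi\<^sub>E UNIV U"
    proof (clarsimp simp: PiE_iff)
      fix k show "f' k \<in> U k"
      proof (cases "k < N")
        case True then show ?thesis using f' U(2) by (auto simp: PiE_iff)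
      next
        case False then have "U k = {V. openin X V}" using N by (metis (mono_tags, lifting) UNIV_I mem_Collect_eq)
        then show ?thesis using f' by (auto simp: krom_carrier_def)
      qed
    qed
    then show "f' \<in> T" using U(3) by blast
  qed
  then show ?thesis using OT by blast
qed

lemma krom_cyl_open:
  assumes "f \<in> krom_carrier X"
  shows "openin (krom_space X) {f' \<in> krom_carrier X. \<forall>k<N. f' k = f k}"
proof -
  define S where "S = (\<lambda>k. if k < N then {f k} else {U. openin X U})"
  have "openin (product_topology (\<lambda>n. discrete_topology {U. openin X U}) UNIV) (Pi\<^sub>E UNIV S)"
  proof (subst openin_PiE_gen, rule disjI2, intro conjI)
    show "finite {i \<in> UNIV. S i \<noteq> topspace (discrete_topology {U. openin X U})}"
      by (rule finite_subset[of _ "{..<N}"]) (auto simp: S_def)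
    show "\<forall>i\<in>UNIV. openin (discrete_topology {U. openin X U}) (S i)"
      using assms by (auto simp: S_def krom_carrier_def)
  qed
  moreover have "{f' \<in> krom_carrier X. \<forall>k<N. f' k = f k} = Pi\<^sub>E UNIV S \<inter> krom_carrier X"
  proof (rule set_eqI)
    fix f'
    have co: "f' \<in> krom_carrier X \<Longrightarrow> openin X (f' k)" for k by (simp add: krom_carrier_def)
    have "f' \<in> Pi\<^sub>E UNIV S \<longleftrightarrow> (\<forall>k. f' k \<in> S k)" by (simp add: PiE_iff)
    moreover have "(\<forall>k. f' k \<in> S k) \<longleftrightarrow> (\<forall>k<N. f' k = f k)" if c: "f' \<in> krom_carrier X"
    proof
      assume a: "\<forall>k. f' k \<in> S k"
      show "\<forall>k<N. f' k = f k"
      proof (intro allI impI)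
        fix k assume "k < N"
        then have "S k = {f k}" by (simp add: S_def)
        then show "f' k = f k" using a by blast
      qed
    next
      assume a: "\<forall>k<N. f' k = f k"
      show "\<forall>k. f' k \<in> S k"
      proof
        fix k show "f' k \<in> S k"
        proof (cases "k < N")
          case True then show ?thesis using a by (simp add: S_def)
        next
          case False then show ?thesis using co[OF c] by (simp add: S_def)
        qed
      qed
    qed
    ultimately show "f' \<in> {f' \<in> krom_carrier X. \<forall>k<N. f' k = f k} \<longleftrightarrow> f' \<in> Pi\<^sub>E UNIV S \<inter> krom_carrier X"
      by blast
  qed
  ultimately show ?thesis unfolding krom_space_def openin_subtopology by blast
qed

definition cyl :: "('i \<Rightarrow> 'a topology) \<Rightarrow> 'i set \<Rightarrow> ('i \<Rightarrow> nat \<Rightarrow> 'a set) \<Rightarrow> 'i set \<Rightarrow> nat \<Rightarrow> ('i \<Rightarrow> nat \<Rightarrow> 'a set) set" where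
  "cyl X I g J N = {f \<in> topspace (product_topology (\<lambda>i. krom_space (X i)) I). \<forall>i\<in>J. \<forall>k<N. f i k = g i k}"

definition Lb :: "('i \<Rightarrow> 'a topology) \<Rightarrow> 'i set \<Rightarrow> ('i \<Rightarrow> nat \<Rightarrow> 'a set) \<Rightarrow> 'i set \<Rightarrow> nat \<Rightarrow> ('i \<Rightarrow> 'a) set" where
  "Lb X I g J N = {y \<in> topspace (product_topology X I). \<forall>i\<in>J. \<forall>k<N. y i \<in> g i k}"

lemma cyl_mono: "J \<subseteq> J' \<Longrightarrow> N \<le> N' \<Longrightarrow> cyl X I g J' N' \<subseteq> cyl X I g J N"
  unfolding cyl_def by auto

lemma Lb_mono: "J \<subseteq> J' \<Longrightarrow> N \<le> N' \<Longrightarrow> Lb X I g J' N' \<subseteq> Lb X I g J N"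
  unfolding Lb_def by auto

lemma Lb_agree: "\<forall>i\<in>J. \<forall>k<N. g' i k = g i k \<Longrightarrow> Lb X I g' J N = Lb X I g J N"
  unfolding Lb_def by auto

lemma Z_nbhd:
  assumes "openin (product_topology (\<lambda>i. krom_space (X i)) I) Op" "g \<in> Op"
  shows "\<exists>J N. finite J \<and> J \<subseteq> I \<and> cyl X I g J N \<subseteq> Op"
proof -
  obtain U where U: "finite {i \<in> I. U i \<noteq> topspace (krom_space (X i))}"
    "\<forall>i\<in>I. openin (krom_space (X i)) (U i)" "g \<in> Pi\<^sub>E I U" "Pi\<^sub>E I U \<subseteq> Op"
    using assms(1)[unfolded openin_product_topology_alt, rule_format, OF assms(2)] by blast
  define J where "J = {i \<in> I. U i \<noteq> topspace (krom_space (X i))}"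
  have "\<forall>i\<in>J. \<exists>N. {f' \<in> krom_carrier (X i). \<forall>k<N. f' k = g i k} \<subseteq> U i"
  proof
    fix i assume "i \<in> J"
    then have i: "i \<in> I" by (simp add: J_def)
    have "openin (krom_space (X i)) (U i)" using U(2) i by blast
    moreover have "g i \<in> U i" using U(3) i by (simp add: PiE_iff)
    ultimately show "\<exists>N. {f' \<in> krom_carrier (X i). \<forall>k<N. f' k = g i k} \<subseteq> U i" by (rule krom_nbhd)
  qed
  from bchoice[OF this] obtain NN where NN: "\<forall>i\<in>J. {f' \<in> krom_carrier (X i). \<forall>k<NN i. f' k = g i k} \<subseteq> U i"
    by blast
  define N where "N = (\<Sum>i\<in>J. NN i)"
  have fJ: "finite J" using U(1) J_def by simp
  have "cyl X I g J N \<subseteq> Pi\<^sub>E I U"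
  proof
    fix f assume f: "f \<in> cyl X I g J N"
    then have ft: "f \<in> Pi\<^sub>E I (\<lambda>i. krom_carrier (X i))" by (simp add: cyl_def topspace_krom)
    show "f \<in> Pi\<^sub>E I U"
    proof (clarsimp simp: PiE_iff, intro conjI ballI)
      fix i assume i: "i \<in> I"
      show "f i \<in> U i"
      proof (cases "i \<in> J")
        case True
        have "NN i \<le> N" unfolding N_def using fJ True by (simp add: member_le_sum)
        then have "f i \<in> {f' \<in> krom_carrier (X i). \<forall>k<NN i. f' k = g i k}"
          using f ft i True by (auto simp: cyl_def PiE_iff)
        then show ?thesis using NN True by blast
      next
        case False then show ?thesis using i ft by (auto simp: J_def topspace_krom PiE_iff)
      qed
    next
      show "f \<in> extensional I" using ft by (simp add: PiE_iff)
    qed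
  qed
  then have "cyl X I g J N \<subseteq> Op" using U(4) by (rule subset_trans)
  moreover have "J \<subseteq> I" by (auto simp: J_def)
  ultimately show ?thesis using fJ by blast
qed

lemma krom_open_carrier[simp]: "openin (krom_space X) (krom_carrier X)"
  by (metis openin_topspace topspace_krom)

lemma cyl_open:
  assumes "g \<in> topspace (product_topology (\<lambda>i. krom_space (X i)) I)" "finite J" "J \<subseteq> I"
  shows "openin (product_topology (\<lambda>i. krom_space (X i)) I) (cyl X I g J N)"
proof -
  define S where "S = (\<lambda>i. if i \<in> J then {f' \<in> krom_carrier (X i). \<forall>k<N. f' k = g i k} else krom_carrier (X i))"
  have eq: "cyl X I g J N = Pi\<^sub>E I S"
  proof (rule set_eqI)
    fix f
    have "f \<in> cyl X I g J N \<longleftrightarrow> f \<in> extensional I \<and> (\<forall>i\<in>I. f i \<in> krom_carrier (X i)) \<and> (\<forall>i\<in>J. \<forall>k<N. f i k = g i k)"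
      by (auto simp: cyl_def PiE_iff topspace_krom)
    also have "\<dots> \<longleftrightarrow> f \<in> Pi\<^sub>E I S" using assms(3) by (auto simp: S_def PiE_iff)
    finally show "f \<in> cyl X I g J N \<longleftrightarrow> f \<in> Pi\<^sub>E I S" .
  qed
  have "openin (product_topology (\<lambda>i. krom_space (X i)) I) (Pi\<^sub>E I S)"
  proof (subst openin_PiE_gen, rule disjI2, intro conjI)
    show "finite {i \<in> I. S i \<noteq> topspace (krom_space (X i))}"
      by (rule finite_subset[OF _ assms(2)]) (auto simp: S_def topspace_krom)
    show "\<forall>i\<in>I. openin (krom_space (X i)) (S i)"
      using assms(1) krom_cyl_open by (auto simp: S_def topspace_krom PiE_iff)
  qed
  then show ?thesis using eq by simp
qed

lemma Lb_open:
  assumes "g \<in> topspace (product_topology (\<lambda>i. krom_space (X i)) I)" "finite J" "J \<subseteq> I"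
  shows "openin (product_topology X I) (Lb X I g J N)"
proof -
  define S where "S = (\<lambda>i. if i \<in> J then (\<Inter>k\<in>{..<N}. g i k) \<inter> topspace (X i) else topspace (X i))"
  have eq: "Lb X I g J N = Pi\<^sub>E I S"
  proof (rule set_eqI)
    fix f
    have "f \<in> Lb X I g J N \<longleftrightarrow> f \<in> extensional I \<and> (\<forall>i\<in>I. f i \<in> topspace (X i)) \<and> (\<forall>i\<in>J. \<forall>k<N. f i \<in> g i k)"
      by (auto simp: Lb_def PiE_iff)
    also have "\<dots> \<longleftrightarrow> f \<in> Pi\<^sub>E I S" using assms(3) by (auto simp: S_def PiE_iff)
    finally show "f \<in> Lb X I g J N \<longleftrightarrow> f \<in> Pi\<^sub>E I S" .
  qed
  have "openin (product_topology X I) (Pi\<^sub>E I S)"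
  proof (subst openin_PiE_gen, rule disjI2, intro conjI)
    show "finite {i \<in> I. S i \<noteq> topspace (X i)}"
      by (rule finite_subset[OF _ assms(2)]) (auto simp: S_def)
    show "\<forall>i\<in>I. openin (X i) (S i)"
    proof
      fix i assume i: "i \<in> I"
      have "g i \<in> krom_carrier (X i)" using assms(1) i by (auto simp: topspace_krom PiE_iff)
      then have "\<forall>k. openin (X i) (g i k)" using kc_open by blast
      then show "openin (X i) (S i)" by (auto simp: S_def)
    qed
  qed
  then show ?thesis using eq by simp
qed

lemma Z_point:
  assumes "g \<in> topspace (product_topology (\<lambda>i. krom_space (X i)) I)"
  shows "\<exists>x\<in>topspace (product_topology X I). \<forall>i\<in>I. \<forall>k. x i \<in> g i k"
proof -
  have gi: "\<forall>i\<in>I. g i \<in> krom_carrier (X i)" using assms by (auto simp: topspace_krom PiE_iff)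
  define x where "x = (\<lambda>i. if i \<in> I then SOME z. \<forall>k. z \<in> g i k else undefined)"
  have xk: "\<forall>i\<in>I. \<forall>k. x i \<in> g i k"
  proof (intro ballI allI)
    fix i k assume i: "i \<in> I"
    have ex: "\<exists>z. \<forall>k. z \<in> g i k" using gi i kc_pt by blast
    have "\<forall>k. x i \<in> g i k" using someI_ex[OF ex] i by (simp add: x_def)
    then show "x i \<in> g i k" by blast
  qed
  have "x \<in> topspace (product_topology X I)"
  proof (clarsimp simp: PiE_iff, intro conjI ballI)
    fix i assume i: "i \<in> I"
    have "openin (X i) (g i 0)" using gi i kc_open by blast
    then show "x i \<in> topspace (X i)" using xk i openin_subset by blast
  next
    show "x \<in> extensional I" by (simp add: x_def extensional_def)
  qed
  then show ?thesis using xk by blast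
qed

lemma ext_lemma:
  assumes g0: "g0 \<in> topspace (product_topology (\<lambda>i. krom_space (X i)) I)"
    and J: "finite J" "J \<subseteq> I"
    and W: "openin (product_topology X I) W" "W \<noteq> {}" "W \<subseteq> Lb X I g0 J N"
  shows "\<exists>g J'. g \<in> topspace (product_topology (\<lambda>i. krom_space (X i)) I) \<and> finite J' \<and> J \<subseteq> J' \<and> J' \<subseteq> I
     \<and> (\<forall>i\<in>J. \<forall>k<N. g i k = g0 i k) \<and> Lb X I g J' (Suc N) \<subseteq> W"
proof -
  obtain y where y: "y \<in> W" using W(2) by blast
  obtain U where U: "finite {i \<in> I. U i \<noteq> topspace (X i)}"
    "\<forall>i\<in>I. openin (X i) (U i)" "y \<in> Pi\<^sub>E I U" "Pi\<^sub>E I U \<subseteq> W"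
    using W(1) y unfolding openin_product_topology_alt by blast
  define J' where "J' = J \<union> {i \<in> I. U i \<noteq> topspace (X i)}"
  define g where "g = (\<lambda>i. if i \<in> I then (\<lambda>k. if i \<in> J \<and> k < N then g0 i k else U i) else undefined)"
  have g0i: "\<forall>i\<in>I. g0 i \<in> krom_carrier (X i)" using g0 by (auto simp: topspace_krom PiE_iff)
  have yL: "y \<in> Lb X I g0 J N" using y W(3) by blast
  have Usub: "z \<in> g0 i k" if "i \<in> I" "i \<in> J" "z \<in> U i" "k < N" for i z k
  proof -
    have "y(i := z) \<in> Pi\<^sub>E I U" using U(3) that by (auto simp: PiE_iff extensional_def)
    then have "y(i := z) \<in> Lb X I g0 J N" using U(4) W(3) by blast
    then show ?thesis using that by (auto simp: Lb_def)
  qed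
  have gi: "g i \<in> krom_carrier (X i)" if i: "i \<in> I" for i
  proof -
    have c0: "\<forall>k. openin (X i) (g0 i k) \<and> g0 i k \<noteq> {} \<and> g0 i (Suc k) \<subseteq> g0 i k"
      using g0i i kc_open kc_ne kc_dec by blast
    have yU: "y i \<in> U i" using U(3) i by (auto simp: PiE_iff)
    have "\<forall>k. openin (X i) (g i k) \<and> g i k \<noteq> {} \<and> g i (Suc k) \<subseteq> g i k"
    proof
      fix k
      show "openin (X i) (g i k) \<and> g i k \<noteq> {} \<and> g i (Suc k) \<subseteq> g i k"
        using c0 yU U(2) i Usub[of i _ k] by (auto simp: g_def)
    qed
    moreover have "\<forall>k. y i \<in> g i k"
      using yU yL i by (auto simp: g_def Lb_def)
    ultimately show ?thesis using kc_intro[of "X i" "g i" "y i"] by blast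
  qed
  have gt: "g \<in> topspace (product_topology (\<lambda>i. krom_space (X i)) I)"
    using gi by (auto simp: topspace_krom PiE_iff g_def extensional_def)
  have "Lb X I g J' (Suc N) \<subseteq> Pi\<^sub>E I U"
  proof
    fix z assume z: "z \<in> Lb X I g J' (Suc N)"
    show "z \<in> Pi\<^sub>E I U"
    proof (clarsimp simp: PiE_iff, intro conjI ballI)
      fix i assume i: "i \<in> I"
      show "z i \<in> U i"
      proof (cases "i \<in> J'")
        case True
        then have "z i \<in> g i N" using z by (auto simp: Lb_def)
        then show ?thesis using i by (simp add: g_def)
      next
        case False then show ?thesis using z i by (auto simp: Lb_def J'_def PiE_iff)
      qed
    next
      show "z \<in> extensional I" using z by (auto simp: Lb_def PiE_iff)
    qed
  qed
  then have LW: "Lb X I g J' (Suc N) \<subseteq> W" using U(4) by (rule subset_trans)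
  have "\<forall>i\<in>J. \<forall>k<N. g i k = g0 i k" using J(2) by (auto simp: g_def)
  moreover have "finite J'" "J \<subseteq> J'" "J' \<subseteq> I" using U(1) J by (auto simp: J'_def)
  ultimately have "g \<in> topspace (product_topology (\<lambda>i. krom_space (X i)) I) \<and> finite J' \<and> J \<subseteq> J' \<and> J' \<subseteq> I
     \<and> (\<forall>i\<in>J. \<forall>k<N. g i k = g0 i k) \<and> Lb X I g J' (Suc N) \<subseteq> W" using gt LW by blast
  then show ?thesis by blast
qed

lemma ext_lemma2:
  assumes g0: "g0 \<in> topspace (product_topology (\<lambda>i. krom_space (X i)) I)"
    and J: "finite J" "J \<subseteq> I"
    and W: "openin (product_topology X I) W" "W \<noteq> {}" "W \<subseteq> Lb X I g0 J N"
    and E: "openin (product_topology (\<lambda>i. krom_space (X i)) I) E"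
      "(product_topology (\<lambda>i. krom_space (X i)) I) closure_of E = topspace (product_topology (\<lambda>i. krom_space (X i)) I)"
  shows "\<exists>g J' N'. g \<in> topspace (product_topology (\<lambda>i. krom_space (X i)) I) \<and> finite J' \<and> J \<subseteq> J' \<and> J' \<subseteq> I
     \<and> N < N' \<and> (\<forall>i\<in>J. \<forall>k<N. g i k = g0 i k) \<and> cyl X I g J' N' \<subseteq> E \<and> Lb X I g J' N' \<subseteq> W"
proof -
  obtain g1 J1 where g1: "g1 \<in> topspace (product_topology (\<lambda>i. krom_space (X i)) I)" "finite J1" "J \<subseteq> J1" "J1 \<subseteq> I"
     "\<forall>i\<in>J. \<forall>k<N. g1 i k = g0 i k" "Lb X I g1 J1 (Suc N) \<subseteq> W"
    using ext_lemma[OF g0 J W] by blast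
  have "openin (product_topology (\<lambda>i. krom_space (X i)) I) (cyl X I g1 J1 (Suc N))"
    using cyl_open g1 by blast
  moreover have "g1 \<in> cyl X I g1 J1 (Suc N)" using g1(1) by (simp add: cyl_def)
  ultimately have "E \<inter> cyl X I g1 J1 (Suc N) \<noteq> {}" using E(2) dense_intersects_open by blast
  then obtain g where g: "g \<in> E" "g \<in> cyl X I g1 J1 (Suc N)" by blast
  obtain J2 N2 where J2: "finite J2" "J2 \<subseteq> I" "cyl X I g J2 N2 \<subseteq> E" using Z_nbhd[OF E(1) g(1)] by blast
  define J' where "J' = J1 \<union> J2"
  define N' where "N' = max (Suc N) N2"
  have gt: "g \<in> topspace (product_topology (\<lambda>i. krom_space (X i)) I)" using g(2) by (simp add: cyl_def)
  have ag: "\<forall>i\<in>J1. \<forall>k<Suc N. g i k = g1 i k" using g(2) by (simp add: cyl_def)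
  have "cyl X I g J' N' \<subseteq> E" using cyl_mono[of J2 J' N2 N' X I g] J2(3) by (auto simp: J'_def N'_def)
  moreover have "Lb X I g J' N' \<subseteq> W"
  proof -
    have "Lb X I g J' N' \<subseteq> Lb X I g J1 (Suc N)" by (rule Lb_mono) (auto simp: J'_def N'_def)
    also have "\<dots> = Lb X I g1 J1 (Suc N)" using Lb_agree[OF ag] .
    finally show ?thesis using g1(6) by blast
  qed
  moreover have "\<forall>i\<in>J. \<forall>k<N. g i k = g0 i k" using ag g1(3,5) by auto
  moreover have "finite J'" "J \<subseteq> J'" "J' \<subseteq> I" "N < N'" using g1 J2 by (auto simp: J'_def N'_def)
  ultimately have "g \<in> topspace (product_topology (\<lambda>i. krom_space (X i)) I) \<and> finite J' \<and> J \<subseteq> J' \<and> J' \<subseteq> I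
     \<and> N < N' \<and> (\<forall>i\<in>J. \<forall>k<N. g i k = g0 i k) \<and> cyl X I g J' N' \<subseteq> E \<and> Lb X I g J' N' \<subseteq> W"
    using gt by blast
  then show ?thesis by blast
qed



lemma limit_lemma:
  fixes h :: "nat \<Rightarrow> 'i \<Rightarrow> nat \<Rightarrow> 'a set" and JJ :: "nat \<Rightarrow> 'i set" and NN :: "nat \<Rightarrow> nat"
  assumes ht: "\<forall>n. h n \<in> topspace (product_topology (\<lambda>i. krom_space (X i)) I)"
    and JI: "\<forall>n. JJ n \<subseteq> I"
    and step: "\<forall>n. JJ n \<subseteq> JJ (Suc n) \<and> NN n < NN (Suc n) \<and> (\<forall>i\<in>JJ n. \<forall>k<NN n. h (Suc n) i k = h n i k)"
    and x: "\<forall>n. x \<in> Lb X I (h n) (JJ n) (NN n)"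
  shows "\<exists>g \<in> topspace (product_topology (\<lambda>i. krom_space (X i)) I). \<forall>n. g \<in> cyl X I (h n) (JJ n) (NN n)"
proof -
  have mono: "JJ n \<subseteq> JJ (n+d) \<and> NN n \<le> NN (n+d) \<and> (\<forall>i\<in>JJ n. \<forall>k<NN n. h (n+d) i k = h n i k)" for n d
  proof (induction d)
    case 0 then show ?case by simp
  next
    case (Suc d)
    have s: "JJ (n+d) \<subseteq> JJ (Suc (n+d))" "NN (n+d) < NN (Suc (n+d))"
      "\<forall>i\<in>JJ (n+d). \<forall>k<NN (n+d). h (Suc (n+d)) i k = h (n+d) i k" using step by blast+
    show ?case
    proof (intro conjI ballI allI impI)
      show "JJ n \<subseteq> JJ (n + Suc d)" using Suc s by auto
      show "NN n \<le> NN (n + Suc d)" using Suc s by auto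
      fix i k assume "i \<in> JJ n" "k < NN n"
      then have "i \<in> JJ (n+d)" "k < NN (n+d)" using Suc by auto
      then show "h (n + Suc d) i k = h n i k" using s(3) Suc \<open>i \<in> JJ n\<close> \<open>k < NN n\<close> by auto
    qed
  qed
  have NNge: "n \<le> NN n" for n
  proof (induction n)
    case (Suc n) then show ?case using step by (metis Suc_le_eq le_less_trans)
  qed simp
  define M where "M i = (LEAST m. i \<in> JJ m)" for i
  define g where "g i = (if \<exists>m. i \<in> JJ m then (\<lambda>k. h (M i + k + 1) i k) else h 0 i)" for i
  have key: "g i k = h m i k" if "i \<in> JJ m" "k < NN m" for i m k
  proof -
    have ex: "\<exists>m. i \<in> JJ m" using that by blast
    have iM: "i \<in> JJ (M i)" unfolding M_def using that(1) by (rule LeastI)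
    define a where "a = M i + k + 1"
    have ia: "i \<in> JJ a" using mono[of "M i" "k+1"] iM by (auto simp: a_def)
    have ka: "k < NN a" using NNge[of a] by (simp add: a_def)
    have "g i k = h a i k" using ex by (simp add: g_def a_def)
    also have "\<dots> = h (a + m) i k" using mono[of a m] ia ka by simp
    also have "\<dots> = h (m + a) i k" by (simp add: add.commute)
    also have "\<dots> = h m i k" using mono[of m a] that by simp
    finally show ?thesis .
  qed
  have hi: "h n i \<in> krom_carrier (X i)" if "i \<in> I" for n i
    using ht that by (auto simp: topspace_krom PiE_iff)
  have gt: "g \<in> topspace (product_topology (\<lambda>i. krom_space (X i)) I)"
  proof (clarsimp simp: PiE_iff topspace_krom, intro conjI ballI)
    fix i assume i: "i \<in> I"
    show "g i \<in> krom_carrier (X i)"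
    proof (cases "\<exists>m. i \<in> JJ m")
      case True
      have big: "\<exists>m. i \<in> JJ m \<and> k < NN m" for k
      proof -
        have iM: "i \<in> JJ (M i)" unfolding M_def using True by (metis LeastI)
        have "i \<in> JJ (M i + (k+1))" using mono[of "M i" "k+1"] iM by auto
        moreover have "k < NN (M i + (k+1))" using NNge[of "M i + (k+1)"] by simp
        ultimately show ?thesis by blast
      qed
      have c: "\<forall>k. openin (X i) (g i k) \<and> g i k \<noteq> {} \<and> g i (Suc k) \<subseteq> g i k"
      proof
        fix k
        obtain m where m: "i \<in> JJ m" "Suc k < NN m" using big by blast
        have "g i k = h m i k" "g i (Suc k) = h m i (Suc k)" using key m by auto
        then show "openin (X i) (g i k) \<and> g i k \<noteq> {} \<and> g i (Suc k) \<subseteq> g i k"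
          using hi[OF i, of m] kc_open[of "h m i"] kc_ne[of "h m i"] kc_dec[of "h m i"] by simp
      qed
      have "\<forall>k. x i \<in> g i k"
      proof
        fix k
        obtain m where m: "i \<in> JJ m" "k < NN m" using big by blast
        have "x i \<in> h m i k" using x m by (auto simp: Lb_def)
        then show "x i \<in> g i k" using key m by simp
      qed
      then show ?thesis using c kc_intro[of "X i" "g i" "x i"] by blast
    next
      case False then show ?thesis using hi[OF i, of 0] by (simp add: g_def)
    qed
  next
    show "g \<in> extensional I" unfolding extensional_def
    proof (intro CollectI allI impI)
      fix i assume "i \<notin> I"
      then have "\<not> (\<exists>m. i \<in> JJ m)" using JI by blast
      then show "g i = undefined" using ht \<open>i \<notin> I\<close> by (auto simp: g_def PiE_iff extensional_def)
    qed
  qed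
  have "\<forall>n. g \<in> cyl X I (h n) (JJ n) (NN n)"
    using gt key by (auto simp: cyl_def)
  then show ?thesis using gt by blast
qed

lemma dense_meet:
  assumes "X closure_of S = topspace X" "openin X T" "T \<noteq> {}"
  shows "S \<inter> T \<noteq> {}"
  using assms dense_intersects_open by blast

lemma dir1:
  assumes "baire_space (product_topology (\<lambda>i. krom_space (X i)) I)"
  shows "baire_space (product_topology X I)"
  unfolding baire_space_def
proof (intro allI impI)
  let ?Z = "product_topology (\<lambda>i. krom_space (X i)) I"
  let ?Y = "product_topology X I"
  fix \<U> assume U: "countable \<U> \<and> (\<forall>U\<in>\<U>. openin ?Y U \<and> ?Y closure_of U = topspace ?Y)"
  define EE where "EE D = {g \<in> topspace ?Z. \<exists>J N. finite J \<and> J \<subseteq> I \<and> Lb X I g J N \<subseteq> D}" for D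
  have EEo: "openin ?Z (EE D)" for D
  proof (subst openin_subopen, intro ballI)
    fix g assume g: "g \<in> EE D"
    then obtain J N where JN: "finite J" "J \<subseteq> I" "Lb X I g J N \<subseteq> D" and gt: "g \<in> topspace ?Z"
      unfolding EE_def by blast
    have "cyl X I g J N \<subseteq> EE D"
    proof
      fix f assume f: "f \<in> cyl X I g J N"
      then have "Lb X I f J N = Lb X I g J N" by (intro Lb_agree) (auto simp: cyl_def)
      then have "Lb X I f J N \<subseteq> D" using JN by simp
      moreover have "f \<in> topspace ?Z" using f by (simp add: cyl_def)
      ultimately show "f \<in> EE D" using JN unfolding EE_def by blast
    qed
    moreover have "openin ?Z (cyl X I g J N)" using cyl_open gt JN by blast
    moreover have "g \<in> cyl X I g J N" using gt by (simp add: cyl_def)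
    ultimately show "\<exists>T. openin ?Z T \<and> g \<in> T \<and> T \<subseteq> EE D" by blast
  qed
  have EEd: "?Z closure_of (EE D) = topspace ?Z" if D: "D \<in> \<U>" for D
  proof (subst dense_intersects_open, intro allI impI)
    fix Op assume Op: "openin ?Z Op \<and> Op \<noteq> {}"
    then obtain gs where gs: "gs \<in> Op" by blast
    have gst: "gs \<in> topspace ?Z" using Op gs openin_subset by blast
    obtain J N where JN: "finite J" "J \<subseteq> I" "cyl X I gs J N \<subseteq> Op"
      using Z_nbhd[of X I Op gs] Op gs by blast
    have Lo: "openin ?Y (Lb X I gs J N)" using Lb_open[OF gst JN(1,2)] .
    obtain y where y0: "y \<in> topspace ?Y" "\<forall>i\<in>I. \<forall>k. y i \<in> gs i k"
      using Z_point[OF gst] by blast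
    have y: "y \<in> Lb X I gs J N" using y0 JN(2) unfolding Lb_def by blast
    have Dd: "?Y closure_of D = topspace ?Y" "openin ?Y D" using U D by auto
    have ne: "D \<inter> Lb X I gs J N \<noteq> {}" using dense_meet[OF Dd(1) Lo] y by blast
    have op: "openin ?Y (D \<inter> Lb X I gs J N)" using Dd(2) Lo by (rule openin_Int)
    obtain g J' where g: "g \<in> topspace ?Z" "finite J'" "J \<subseteq> J'" "J' \<subseteq> I"
      "\<forall>i\<in>J. \<forall>k<N. g i k = gs i k" "Lb X I g J' (Suc N) \<subseteq> D \<inter> Lb X I gs J N"
      using ext_lemma[OF gst JN(1,2) op ne Int_lower2] by metis
    have LD: "Lb X I g J' (Suc N) \<subseteq> D" using g(6) by blast
    have "g \<in> EE D" unfolding EE_def mem_Collect_eq using g(1,2,4) LD by blast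
    moreover have "g \<in> cyl X I gs J N" using g(1,5) by (simp add: cyl_def)
    ultimately show "EE D \<inter> Op \<noteq> {}" using JN(3) by blast
  qed
  have Zb: "?Z closure_of (topspace ?Z \<inter> \<Inter>(EE ` \<U>)) = topspace ?Z"
  proof -
    have H: "countable (EE ` \<U>) \<and> (\<forall>V\<in>EE ` \<U>. openin ?Z V \<and> ?Z closure_of V = topspace ?Z)"
      using U EEo EEd by simp
    show ?thesis using assms[unfolded baire_space_def, THEN spec[of _ "EE ` \<U>"], THEN mp, OF H] .
  qed
  show "?Y closure_of (topspace ?Y \<inter> \<Inter>\<U>) = topspace ?Y"
  proof (subst dense_intersects_open, intro allI impI)
    fix V assume V: "openin ?Y V \<and> V \<noteq> {}"
    then obtain y where y: "y \<in> V" by blast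
    have yt: "y \<in> topspace ?Y" using V y openin_subset by blast
    define g0 where "g0 = (\<lambda>i. if i \<in> I then (\<lambda>k::nat. topspace (X i)) else undefined)"
    have g0t: "g0 \<in> topspace ?Z"
    proof -
      have "g0 i \<in> krom_carrier (X i)" if i: "i \<in> I" for i
      proof -
        have "y i \<in> topspace (X i)" using yt i by (simp add: PiE_iff)
        then have "(\<lambda>k::nat. topspace (X i)) \<in> krom_carrier (X i)"
          by (intro kc_intro[of "X i" _ "y i"]) auto
        then show ?thesis using i by (simp add: g0_def)
      qed
      then show ?thesis by (auto simp: g0_def topspace_krom PiE_iff extensional_def)
    qed
    have Vt: "V \<subseteq> topspace ?Y" using V openin_subset[of ?Y V] by blast
    have "Lb X I g0 {} 0 = topspace ?Y" by (simp add: Lb_def)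
    then have "V \<subseteq> Lb X I g0 {} 0" using Vt by simp
    then obtain g1 J1 where g1: "g1 \<in> topspace ?Z" "finite J1" "J1 \<subseteq> I" "Lb X I g1 J1 (Suc 0) \<subseteq> V"
      using ext_lemma[OF g0t finite.emptyI empty_subsetI _ _ \<open>V \<subseteq> Lb X I g0 {} 0\<close>] V by metis
    have "openin ?Z (cyl X I g1 J1 (Suc 0))" using cyl_open g1 by blast
    moreover have "g1 \<in> cyl X I g1 J1 (Suc 0)" using g1 by (simp add: cyl_def)
    ultimately have "(topspace ?Z \<inter> \<Inter>(EE ` \<U>)) \<inter> cyl X I g1 J1 (Suc 0) \<noteq> {}"
      using dense_meet[OF Zb] by blast
    then obtain g where g: "g \<in> topspace ?Z" "\<forall>D\<in>\<U>. g \<in> EE D" "g \<in> cyl X I g1 J1 (Suc 0)" by blast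
    obtain x where x: "x \<in> topspace ?Y" "\<forall>i\<in>I. \<forall>k. x i \<in> g i k"
      using Z_point[OF g(1)] by blast
    have "x \<in> Lb X I g J1 (Suc 0)" using x g1(3) unfolding Lb_def by blast
    also have "\<dots> = Lb X I g1 J1 (Suc 0)" by (rule Lb_agree) (use g in \<open>auto simp: cyl_def\<close>)
    finally have xV: "x \<in> V" using g1(4) by blast
    have "x \<in> D" if "D \<in> \<U>" for D
    proof -
      have "g \<in> EE D" using g(2) that by blast
      then have "\<exists>J N. finite J \<and> J \<subseteq> I \<and> Lb X I g J N \<subseteq> D" unfolding EE_def by simp
      then obtain J N where JN: "finite J" "J \<subseteq> I" "Lb X I g J N \<subseteq> D" by blast
      have "x \<in> Lb X I g J N" using x JN(2) unfolding Lb_def by blast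
      then show ?thesis using JN by blast
    qed
    then show "(topspace ?Y \<inter> \<Inter>\<U>) \<inter> V \<noteq> {}" using x xV by blast
  qed
qed



definition pext :: "('i \<Rightarrow> nat \<Rightarrow> 'a set) \<times> 'i set \<times> nat \<Rightarrow> ('i \<Rightarrow> nat \<Rightarrow> 'a set) \<times> 'i set \<times> nat \<Rightarrow> bool" where
  "pext p q \<longleftrightarrow> fst (snd p) \<subseteq> fst (snd q) \<and> snd (snd p) < snd (snd q) \<and>
     (\<forall>i\<in>fst (snd p). \<forall>k<snd (snd p). fst q i k = fst p i k)"

definition Lp :: "('i \<Rightarrow> 'a topology) \<Rightarrow> 'i set \<Rightarrow> ('i \<Rightarrow> nat \<Rightarrow> 'a set) \<times> 'i set \<times> nat \<Rightarrow> ('i \<Rightarrow> 'a) set" where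
  "Lp X I p = Lb X I (fst p) (fst (snd p)) (snd (snd p))"

definition Cp :: "('i \<Rightarrow> 'a topology) \<Rightarrow> 'i set \<Rightarrow> ('i \<Rightarrow> nat \<Rightarrow> 'a set) \<times> 'i set \<times> nat \<Rightarrow> ('i \<Rightarrow> nat \<Rightarrow> 'a set) set" where
  "Cp X I p = cyl X I (fst p) (fst (snd p)) (snd (snd p))"

lemma pext_Lsub: "pext p q \<Longrightarrow> Lp X I q \<subseteq> Lp X I p"
proof -
  assume pq: "pext p q"
  have "Lp X I q \<subseteq> Lb X I (fst q) (fst (snd p)) (snd (snd p))"
    unfolding Lp_def using pq by (intro Lb_mono) (auto simp: pext_def)
  also have "\<dots> = Lp X I p" unfolding Lp_def using pq by (intro Lb_agree) (auto simp: pext_def)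
  finally show ?thesis .
qed

lemma dir2:
  fixes X :: "'i \<Rightarrow> 'a topology" and I :: "'i set"
  assumes YB: "baire_space (product_topology X I)"
  shows "baire_space (product_topology (\<lambda>i. krom_space (X i)) I)"
  unfolding baire_space_def
proof (intro allI impI)
  let ?Z = "product_topology (\<lambda>i. krom_space (X i)) I"
  let ?Y = "product_topology X I"
  fix \<U> assume U: "countable \<U> \<and> (\<forall>U\<in>\<U>. openin ?Z U \<and> ?Z closure_of U = topspace ?Z)"
  show "?Z closure_of (topspace ?Z \<inter> \<Inter>\<U>) = topspace ?Z"
  proof (cases "\<U> = {}")
    case True then show ?thesis by (simp only: Inter_empty Int_UNIV_right closure_of_topspace)
  next
    case Une: False
    define E where "E = from_nat_into \<U>"
    have EU: "E n \<in> \<U>" for n using Une by (simp add: E_def from_nat_into)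
    have rE: "range E = \<U>" using Une U by (simp add: E_def)
    have Eo: "openin ?Z (E n)" and Ed: "?Z closure_of (E n) = topspace ?Z" for n using EU U by auto
    show ?thesis
    proof (subst dense_intersects_open, intro allI impI)
      fix Op assume Op: "openin ?Z Op \<and> Op \<noteq> {}"
      then obtain gs where gs: "gs \<in> Op" by blast
      have gst: "gs \<in> topspace ?Z" using Op gs openin_subset by blast
      obtain J0 N0 where JN0: "finite J0" "J0 \<subseteq> I" "cyl X I gs J0 N0 \<subseteq> Op"
        using Z_nbhd[of X I Op gs] Op gs by blast
      define q0 where "q0 = (gs, J0, N0)"
      define valid where "valid (q::('i \<Rightarrow> nat \<Rightarrow> 'a set) \<times> 'i set \<times> nat) \<longleftrightarrow> fst q \<in> topspace ?Z \<and> finite (fst (snd q)) \<and> fst (snd q) \<subseteq> I" for q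
      define Cand where "Cand p n = {q. valid q \<and> pext p q \<and> Cp X I q \<subseteq> E n}" for p n
      define PD where "PD C \<longleftrightarrow> pairwise (\<lambda>a b. disjnt (Lp X I a) (Lp X I b)) C" for C
      have Lpo: "openin ?Y (Lp X I q)" if "valid q" for q
        using that Lb_open unfolding valid_def Lp_def by blast
      define QQ where "QQ p n C \<longleftrightarrow> C \<subseteq> Cand p n \<and> PD C \<and> (\<forall>q\<in>Cand p n. Lp X I q \<noteq> {} \<longrightarrow> (\<exists>c\<in>C. Lp X I q \<inter> Lp X I c \<noteq> {}))" for p n C
      have maxex: "\<exists>C. QQ p n C" for p n
      proof -
        define A where "A = {C. C \<subseteq> Cand p n \<and> PD C}"
        have "\<forall>C\<in>chains A. \<Union>C \<in> A"
        proof
          fix C assume C: "C \<in> chains A"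
          have "\<Union>C \<subseteq> Cand p n" using C by (auto simp: chains_def A_def)
          moreover have "PD (\<Union>C)" unfolding PD_def pairwise_def
          proof (intro ballI impI)
            fix a b assume a: "a \<in> \<Union>C" and b: "b \<in> \<Union>C" and ab: "a \<noteq> b"
            then obtain Ca Cb where CC: "Ca \<in> C" "Cb \<in> C" "a \<in> Ca" "b \<in> Cb" by blast
            have "Ca \<subseteq> Cb \<or> Cb \<subseteq> Ca" using C CC unfolding chains_def chain_subset_def by blast
            moreover have "PD Ca" "PD Cb" using C CC unfolding chains_def A_def by blast+
            ultimately show "disjnt (Lp X I a) (Lp X I b)" using ab CC unfolding PD_def pairwise_def by blast
          qed
          ultimately show "\<Union>C \<in> A" by (simp add: A_def)
        qed
        then obtain M where M: "M \<in> A" "\<forall>Y\<in>A. M \<subseteq> Y \<longrightarrow> Y = M" using Zorn_Lemma[of A] by blast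
        have "\<forall>q\<in>Cand p n. Lp X I q \<noteq> {} \<longrightarrow> (\<exists>c\<in>M. Lp X I q \<inter> Lp X I c \<noteq> {})"
        proof (intro ballI impI, rule ccontr)
          fix q assume q: "q \<in> Cand p n" "Lp X I q \<noteq> {}" and no: "\<not> (\<exists>c\<in>M. Lp X I q \<inter> Lp X I c \<noteq> {})"
          have PM: "PD M" "M \<subseteq> Cand p n" using M(1) by (auto simp: A_def)
          have "PD (insert q M)" unfolding PD_def pairwise_insert
          proof (intro conjI allI impI)
            fix y assume y: "y \<in> M \<and> y \<noteq> q"
            then have "Lp X I q \<inter> Lp X I y = {}" using no by blast
            then show "disjnt (Lp X I q) (Lp X I y)" "disjnt (Lp X I y) (Lp X I q)"
              by (auto simp: disjnt_def)
          next
            show "pairwise (\<lambda>a b. disjnt (Lp X I a) (Lp X I b)) M" using PM(1) by (simp add: PD_def)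
          qed
          then have "insert q M \<in> A" using q(1) PM(2) by (simp add: A_def)
          then have "insert q M = M" using M(2) by blast
          then have "q \<in> M" by blast
          then show False using no q(2) by blast
        qed
        then have "QQ p n M" using M(1) unfolding A_def QQ_def by blast
        then show ?thesis by blast
      qed
      have "\<forall>p. \<exists>F. \<forall>n. QQ p n (F n)"
      proof
        fix p
        have "\<forall>n. \<exists>C. QQ p n C" using maxex by blast
        then show "\<exists>F. \<forall>n. QQ p n (F n)" by (rule choice)
      qed
      from choice[OF this] obtain MM where MM0: "\<forall>p n. QQ p n (MM p n)" by blast
      have MM: "MM p n \<subseteq> Cand p n \<and> PD (MM p n) \<and>
          (\<forall>q\<in>Cand p n. Lp X I q \<noteq> {} \<longrightarrow> (\<exists>c\<in>MM p n. Lp X I q \<inter> Lp X I c \<noteq> {}))" for p n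
        using MM0 unfolding QQ_def by blast
      define G where "G = rec_nat {q0} (\<lambda>n S. \<Union>p\<in>S. MM p n)"
      have G0: "G 0 = {q0}" by (simp add: G_def)
      have GS: "G (Suc n) = (\<Union>p\<in>G n. MM p n)" for n by (simp add: G_def)
      have q0v: "valid q0" using gst JN0 by (simp add: valid_def q0_def)
      have Gv: "\<forall>q\<in>G n. valid q" for n
      proof (induction n)
        case 0 then show ?case using q0v by (simp add: G0)
      next
        case (Suc n)
        show ?case
        proof
          fix q assume "q \<in> G (Suc n)"
          then obtain p where "q \<in> MM p n" by (auto simp: GS)
          then have "q \<in> Cand p n" using MM by blast
          then show "valid q" by (simp add: Cand_def)
        qed
      qed
      have GPD: "PD (G n)" for n
      proof (induction n)
        case 0 show ?case by (simp add: G0 PD_def)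
      next
        case (Suc n)
        show ?case unfolding PD_def pairwise_def
        proof (intro ballI impI)
          fix a b assume a: "a \<in> G (Suc n)" and b: "b \<in> G (Suc n)" and ab: "a \<noteq> b"
          obtain pa where pa: "pa \<in> G n" "a \<in> MM pa n" using a by (auto simp: GS)
          obtain pb where pb: "pb \<in> G n" "b \<in> MM pb n" using b by (auto simp: GS)
          show "disjnt (Lp X I a) (Lp X I b)"
          proof (cases "pa = pb")
            case True then show ?thesis using MM[of pa n] pa pb ab unfolding PD_def pairwise_def by blast
          next
            case False
            have d: "disjnt (Lp X I pa) (Lp X I pb)" using Suc pa pb False unfolding PD_def pairwise_def by blast
            have "a \<in> Cand pa n" "b \<in> Cand pb n" using MM pa pb by blast+
            then have pe: "pext pa a" "pext pb b" by (simp_all add: Cand_def)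
            have s1: "Lp X I a \<subseteq> Lp X I pa" using pe(1) by (rule pext_Lsub)
            have s2: "Lp X I b \<subseteq> Lp X I pb" using pe(2) by (rule pext_Lsub)
            show ?thesis using d s1 s2 unfolding disjnt_def by blast
          qed
        qed
      qed
      have Gdense: "\<forall>W. openin ?Y W \<and> W \<noteq> {} \<and> W \<subseteq> Lp X I q0 \<longrightarrow> (\<exists>q\<in>G n. W \<inter> Lp X I q \<noteq> {})" for n
      proof (induction n)
        case 0 show ?case by (auto simp: G0)
      next
        case (Suc n)
        show ?case
        proof (intro allI impI)
          fix W assume W: "openin ?Y W \<and> W \<noteq> {} \<and> W \<subseteq> Lp X I q0"
          then obtain p where p: "p \<in> G n" "W \<inter> Lp X I p \<noteq> {}" using Suc by blast
          obtain gp Jp Np where pe: "p = (gp, Jp, Np)" by (cases p)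
          have vp: "valid p" using Gv p(1) by blast
          have pv: "gp \<in> topspace ?Z" "finite Jp" "Jp \<subseteq> I" using vp unfolding valid_def pe by simp_all
          have Lo: "openin ?Y (Lb X I gp Jp Np)" using Lb_open[OF pv] .
          have W1: "openin ?Y (W \<inter> Lb X I gp Jp Np)" using W Lo by blast
          have W2: "W \<inter> Lb X I gp Jp Np \<noteq> {}" using p pe by (simp add: Lp_def)
          obtain g J' N' where g: "g \<in> topspace ?Z" "finite J'" "Jp \<subseteq> J'" "J' \<subseteq> I" "Np < N'"
              "\<forall>i\<in>Jp. \<forall>k<Np. g i k = gp i k" "cyl X I g J' N' \<subseteq> E n" "Lb X I g J' N' \<subseteq> W \<inter> Lb X I gp Jp Np"
            using ext_lemma2[OF pv W1 W2 Int_lower2 Eo Ed] by metis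
          define q where "q = (g, J', N')"
          have qC: "q \<in> Cand p n" using g pe by (auto simp: q_def Cand_def valid_def pext_def Cp_def)
          obtain x where x: "x \<in> topspace ?Y" "\<forall>i\<in>I. \<forall>k. x i \<in> g i k" using Z_point[OF g(1)] by blast
          have "x \<in> Lp X I q" using x g(4) unfolding q_def Lp_def Lb_def by auto
          then have qne: "Lp X I q \<noteq> {}" by blast
          obtain c where c: "c \<in> MM p n" "Lp X I q \<inter> Lp X I c \<noteq> {}" using MM[of p n] qC qne by blast
          have "Lp X I q \<subseteq> W" using g(8) by (auto simp: q_def Lp_def)
          then have "W \<inter> Lp X I c \<noteq> {}" using c by blast
          moreover have "c \<in> G (Suc n)" using c p by (auto simp: GS)
          ultimately show "\<exists>q\<in>G (Suc n). W \<inter> Lp X I q \<noteq> {}" by blast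
        qed
      qed
      let ?L0 = "Lp X I q0"
      have L0o: "openin ?Y ?L0" using Lpo q0v by blast
      have L0t: "?L0 \<subseteq> topspace ?Y" by (auto simp: Lp_def Lb_def)
      obtain x0 where x0: "x0 \<in> topspace ?Y" "\<forall>i\<in>I. \<forall>k. x0 i \<in> gs i k" using Z_point[OF gst] by blast
      have L0ne: "?L0 \<noteq> {}" using x0 JN0(2) unfolding q0_def Lp_def Lb_def by auto
      define D where "D n = (\<Union>q\<in>G n. Lp X I q) \<union> (topspace ?Y - ?Y closure_of ?L0)" for n
      have Do: "openin ?Y (D n)" for n
      proof -
        have "openin ?Y (\<Union>q\<in>G n. Lp X I q)" using Gv Lpo by blast
        moreover have "openin ?Y (topspace ?Y - ?Y closure_of ?L0)"
          by (rule openin_diff[OF openin_topspace closedin_closure_of])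
        ultimately show ?thesis unfolding D_def by blast
      qed
      have Dd: "?Y closure_of (D n) = topspace ?Y" for n
      proof (subst dense_intersects_open, intro allI impI)
        fix U assume Uo: "openin ?Y U \<and> U \<noteq> {}"
        show "D n \<inter> U \<noteq> {}"
        proof (cases "U \<inter> (topspace ?Y - ?Y closure_of ?L0) = {}")
          case False then show ?thesis unfolding D_def by blast
        next
          case True
          have "U \<subseteq> topspace ?Y" using Uo openin_subset by blast
          then have "U \<inter> ?Y closure_of ?L0 \<noteq> {}" using True Uo by blast
          then have "U \<inter> ?L0 \<noteq> {}" using openin_Int_closure_of_eq_empty Uo by blast
          moreover have "openin ?Y (U \<inter> ?L0)" using Uo L0o by blast
          ultimately obtain q where "q \<in> G n" "(U \<inter> ?L0) \<inter> Lp X I q \<noteq> {}"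
            using Gdense[of n] by blast
          then show ?thesis unfolding D_def by blast
        qed
      qed
      have Yb: "?Y closure_of (topspace ?Y \<inter> \<Inter>(range D)) = topspace ?Y"
      proof -
        have H: "countable (range D) \<and> (\<forall>V\<in>range D. openin ?Y V \<and> ?Y closure_of V = topspace ?Y)"
          using Do Dd by simp
        show ?thesis using YB[unfolded baire_space_def, THEN spec[of _ "range D"], THEN mp, OF H] .
      qed
      obtain x where x: "x \<in> topspace ?Y" "\<forall>n. x \<in> D n" "x \<in> ?L0"
        using dense_meet[OF Yb L0o L0ne] by blast
      have xc: "x \<in> ?Y closure_of ?L0" using closure_of_subset[OF L0t] x(3) by blast
      have "\<forall>n. \<exists>q\<in>G n. x \<in> Lp X I q" using x(2) xc unfolding D_def by blast
      then have "\<forall>n. \<exists>q. q \<in> G n \<and> x \<in> Lp X I q" by blast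
      from choice[OF this] obtain pp where pp0: "\<forall>n. pp n \<in> G n \<and> x \<in> Lp X I (pp n)" by blast
      have pp: "pp n \<in> G n \<and> x \<in> Lp X I (pp n)" for n using pp0 by blast
      have chain: "pext (pp n) (pp (Suc n)) \<and> Cp X I (pp (Suc n)) \<subseteq> E n" for n
      proof -
        obtain p where p: "p \<in> G n" "pp (Suc n) \<in> MM p n" using pp[of "Suc n"] by (auto simp: GS)
        have C: "pp (Suc n) \<in> Cand p n" using MM p by blast
        then have "pext p (pp (Suc n))" by (simp add: Cand_def)
        then have "Lp X I (pp (Suc n)) \<subseteq> Lp X I p" by (rule pext_Lsub)
        then have "x \<in> Lp X I p" using pp by blast
        then have "p = pp n" using GPD[of n] pp[of n] p(1) unfolding PD_def pairwise_def disjnt_def by blast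
        then show ?thesis using C by (simp add: Cand_def)
      qed
      have ppv: "valid (pp n)" for n using Gv pp by blast
      obtain g where g: "g \<in> topspace ?Z" "\<forall>n. g \<in> cyl X I (fst (pp n)) (fst (snd (pp n))) (snd (snd (pp n)))"
      proof -
        have "\<exists>g \<in> topspace ?Z. \<forall>n. g \<in> cyl X I (fst (pp n)) (fst (snd (pp n))) (snd (snd (pp n)))"
        proof (rule limit_lemma)
          show "\<forall>n. fst (pp n) \<in> topspace ?Z" using ppv by (simp add: valid_def)
          show "\<forall>n. fst (snd (pp n)) \<subseteq> I" using ppv by (simp add: valid_def)
          show "\<forall>n. fst (snd (pp n)) \<subseteq> fst (snd (pp (Suc n))) \<and> snd (snd (pp n)) < snd (snd (pp (Suc n))) \<and>
              (\<forall>i\<in>fst (snd (pp n)). \<forall>k<snd (snd (pp n)). fst (pp (Suc n)) i k = fst (pp n) i k)"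
            using chain by (simp add: pext_def)
          show "\<forall>n. x \<in> Lb X I (fst (pp n)) (fst (snd (pp n))) (snd (snd (pp n)))"
            using pp by (simp add: Lp_def)
        qed
        then show ?thesis using that by blast
      qed
      have "pp 0 = q0" using pp[of 0] by (simp add: G0)
      then have "g \<in> cyl X I gs J0 N0" using g(2)[rule_format, of 0] by (simp add: q0_def)
      then have gO: "g \<in> Op" using JN0(3) by blast
      have "g \<in> E n" for n using chain[of n] g(2)[rule_format, of "Suc n"] by (auto simp: Cp_def)
      then have "g \<in> \<Inter>\<U>" using rE by blast
      then show "(topspace ?Z \<inter> \<Inter>\<U>) \<inter> Op \<noteq> {}" using g(1) gO by blast
    qed
  qed
qed

theorem theorem4p1:
  fixes X :: "'i \<Rightarrow> 'a topology" and I :: "'i set"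
  shows "baire_space (product_topology X I) \<longleftrightarrow>
         baire_space (product_topology (\<lambda>i. krom_space (X i)) I)"
  using dir1 dir2 by blast


end
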